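(* Let $n\ge2$, let $a_1,\dots,a_n$ be positive integers, let $1\le k\le n$ with $a_k>1$, and let $s=[2a_1,-2a_2,\dots,(-1)^{k-1}2a_k,\dots,(-1)^{n-1}2a_n]$ and $r=[2a_1,-2a_2,\dots,(-1)^{k-1}2(a_k-1),\dots,(-1)^{n-1}2a_n]$ (the same sequence with $a_k$ replaced by $a_k-1$). Then $\Delta_{K(s)}$ and $\Delta_{K(r)}$ have only real zeros and $\delta(K(s))<\delta(K(r))$, where $\delta(K)$ denotes the largest zero of $\Delta_K(t)$.
   Context: For a finite sequence $r=[2a_1,2a_2,\dots,2a_n]$ of nonzero even integers, $K(r)$ denotes the 2-bridge knot or link whose associated rational number has the even continued fraction expansion $1/(2a_1-1/(2a_2-\cdots-1/(2a_n)))$. Let $M(r)$ be the $n\times n$ integer matrix whose $(k,k)$-entry is $a_k$, whose $(k,k+1)$-entry is $1$ ($1\le k\le n-1$), and whose other entries are $0$; $\Delta_{K(r)}(t)=\det(tM(r)-M(r)^T)$ is the (reduced) Alexander polynomial of $K(r)$ (up to sign). *)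

theory Defs
  imports "Jordan_Normal_Form.Determinant" "HOL-Computational_Algebra.Polynomial"
begin

definition M_mat :: "int list \<Rightarrow> int mat" where
  "M_mat r = mat (length r) (length r)
     (\<lambda>(i,j). if i = j then r ! i div 2 else if j = i + 1 then 1 else 0)"

definition alexander_poly :: "int list \<Rightarrow> int poly" where
  "alexander_poly r = det (map_mat (\<lambda>x. [:0, x:]) (M_mat r)
                          - map_mat (\<lambda>x. [:x:]) (transpose_mat (M_mat r)))"

definition only_real_zeros :: "int poly \<Rightarrow> bool" where
  "only_real_zeros p \<longleftrightarrow> (\<forall>z::complex. poly (map_poly of_int p) z = 0 \<longrightarrow> z \<in> \<real>)"

definition delta :: "int list \<Rightarrow> real" where
  "delta r = Max {x::real. poly (map_poly of_int (alexander_poly r)) x = 0}"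

definition alt_seq :: "(nat \<Rightarrow> int) \<Rightarrow> nat \<Rightarrow> int list" where
  "alt_seq a n = map (\<lambda>i. (-1) ^ (i - 1) * (2 * a i)) [1..<n+1]"

end

theory Submission
  imports Defs
begin


definition tri :: "nat \<Rightarrow> (nat \<Rightarrow> 'a::comm_ring_1) \<Rightarrow> (nat \<Rightarrow> 'a) \<Rightarrow> (nat \<Rightarrow> 'a) \<Rightarrow> 'a mat" where
 "tri n f g h = mat n n (\<lambda>(i,j). if i = j then f i else if j = i+1 then g i else if i = j+1 then h j else 0)"

lemma tri_carrier[simp]: "tri n f g h \<in> carrier_mat n n" by (simp add: tri_def)

lemma det_tri1: "det (tri (Suc 0) f g h) = f 0"
  by (simp add: det_single tri_def) 

lemma det_tri:
  "det (tri (Suc (Suc n)) f g h) = f (Suc n) * det (tri (Suc n) f g h) - g n * h n * det (tri n f g h)"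
proof -
  let ?A = "tri (Suc (Suc n)) f g h"
  define B where "B = mat_delete ?A (Suc n) n"
  have Bc: "B \<in> carrier_mat (Suc n) (Suc n)" unfolding B_def
    using mat_delete_carrier[OF tri_carrier[of "Suc (Suc n)" f g h]] by simp
  have dB: "mat_delete B n n = tri n f g h"
    unfolding B_def by (rule eq_matI) (auto simp: mat_delete_def tri_def)
  have dA: "mat_delete ?A (Suc n) (Suc n) = tri (Suc n) f g h"
    by (rule eq_matI) (auto simp: mat_delete_def tri_def)
  have detB: "det B = g n * det (tri n f g h)"
  proof -
    have "det B = (\<Sum>i<Suc n. B $$ (i,n) * cofactor B i n)"
      by (rule laplace_expansion_column[OF Bc]) simp
    also have "(\<Sum>i<n. B $$ (i,n) * cofactor B i n) = 0"
      by (rule sum.neutral) (auto simp: B_def mat_delete_def tri_def)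
    moreover have "B $$ (n,n) = g n" by (simp add: B_def mat_delete_def tri_def)
    ultimately show ?thesis
      by (simp add: dB cofactor_def)
  qed
  have "det ?A = (\<Sum>j<Suc (Suc n). ?A $$ (Suc n,j) * cofactor ?A (Suc n) j)"
    by (rule laplace_expansion_row) auto
  also have "(\<Sum>j<n. ?A $$ (Suc n,j) * cofactor ?A (Suc n) j) = 0"
    by (rule sum.neutral) (auto simp: tri_def)
  moreover have "?A $$ (Suc n, n) = h n" "?A $$ (Suc n, Suc n) = f (Suc n)" by (auto simp: tri_def)
  ultimately show ?thesis
    by (simp add: cofactor_def dA detB[unfolded B_def] algebra_simps)
qed

fun pp :: "(nat \<Rightarrow> 'a::comm_ring_1) \<Rightarrow> nat \<Rightarrow> 'a poly" where
  "pp a 0 = 1"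
| "pp a (Suc 0) = [:- a 1, a 1:]"
| "pp a (Suc (Suc k)) = [:- a (k+2), a (k+2):] * pp a (Suc k) - [:0,1:] * pp a k"

fun qp :: "(nat \<Rightarrow> 'a::comm_ring_1) \<Rightarrow> nat \<Rightarrow> 'a poly" where
  "qp a 0 = 1"
| "qp a (Suc 0) = [:0, a 1:]"
| "qp a (Suc (Suc k)) = [:0, a (k+2):] * qp a (Suc k) - qp a k"

fun sg :: "nat \<Rightarrow> int" where
  "sg 0 = 1"
| "sg (Suc k) = (-1)^k * sg k"

lemma alt_nth: "i < n \<Longrightarrow> alt_seq a n ! i div 2 = (-1)^i * a (Suc i)"
proof -
  assume "i < n"
  hence "alt_seq a n ! i = 2 * ((-1)^i * a (Suc i))" by (simp del: upt_Suc add: alt_seq_def)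
  thus ?thesis by simp
qed

lemma alex_tri: "alexander_poly (alt_seq a n) =
   det (tri n (\<lambda>i. [:- ((-1)^i * a (Suc i)), (-1)^i * a (Suc i):]) (\<lambda>_. [:0,1:]) (\<lambda>_. [:-1:]))"
proof -
  have len: "length (alt_seq a n) = n" by (simp add: alt_seq_def)
  show ?thesis unfolding alexander_poly_def
    by (rule arg_cong[where f=det], rule eq_matI)
       (auto simp: M_mat_def tri_def len alt_nth)
qed

lemma det_tri_pp: "det (tri k (\<lambda>i. [:- ((-1)^i * a (Suc i)), (-1)^i * a (Suc i):]) (\<lambda>_. [:0,1:]) (\<lambda>_. [:-1:]))
   = smult (sg k) (pp a k) \<and>
   det (tri (Suc k) (\<lambda>i. [:- ((-1)^i * a (Suc i)), (-1)^i * a (Suc i):]) (\<lambda>_. [:0,1:]) (\<lambda>_. [:-1:]))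
   = smult (sg (Suc k)) (pp a (Suc k))"
proof (induction k)
  case 0
  then show ?case by (simp add: det_tri1)
next
  case (Suc k)
  then show ?case
    apply (simp only: det_tri)
    apply (simp add: poly_eq_poly_eq_iff[symmetric] fun_eq_iff algebra_simps)
    done
qed

lemma alex_pp: "alexander_poly (alt_seq a n) = smult (sg n) (pp a n)"
  using alex_tri det_tri_pp by metis


lemma mp_mult: "map_poly (of_int::int\<Rightarrow>'a::comm_ring_1) (p*q) = map_poly of_int p * map_poly of_int q"
  by (rule poly_eqI) (simp add: coeff_map_poly coeff_mult of_int_sum)

lemma mp_diff: "map_poly (of_int::int\<Rightarrow>'a::comm_ring_1) (p-q) = map_poly of_int p - map_poly of_int q"
  by (rule poly_eqI) (simp add: coeff_map_poly)

lemma mp_pp: "map_poly (of_int::int\<Rightarrow>'a::comm_ring_1) (pp a k) = pp (\<lambda>i. of_int (a i)) k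
   \<and> map_poly (of_int::int\<Rightarrow>'a::comm_ring_1) (pp a (Suc k)) = pp (\<lambda>i. of_int (a i)) (Suc k)"
  by (induction k) (simp_all add: mp_mult mp_diff map_poly_pCons map_poly_smult)

lemma eval_alex: "poly (map_poly (of_int::int\<Rightarrow>'a::comm_ring_1) (alexander_poly (alt_seq a n))) x
   = of_int (sg n) * poly (pp (\<lambda>i. of_int (a i)) n) x"
  by (simp add: alex_pp map_poly_smult mp_pp)

lemma pp_qp: fixes s :: "'a::field" assumes "s \<noteq> 0"
  shows "poly (pp a k) (s^2) = s^k * poly (qp a k) (s - 1/s)
   \<and> poly (pp a (Suc k)) (s^2) = s^(Suc k) * poly (qp a (Suc k)) (s - 1/s)"
proof (induction k)
  case 0
  then show ?case using assms by (simp add: field_simps power2_eq_square)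
next
  case (Suc k)
  then show ?case using assms by (simp add: field_simps power2_eq_square)
qed

lemma qp_rec: "poly (qp a (Suc (Suc k))) x = a (Suc (Suc k)) * x * poly (qp a (Suc k)) x - poly (qp a k) x"
  by (simp add: algebra_simps)

lemma cd: "(\<Sum>j<Suc n. (x * b (Suc j) - y * c (Suc j)) * poly (qp b j) x * poly (qp c j) y)
  = poly (qp b (Suc n)) x * poly (qp c n) y - poly (qp c (Suc n)) y * poly (qp b n) x"
proof (induction n)
  case 0 then show ?case by (simp add: algebra_simps)
next
  case (Suc n)
  show ?case
    apply (subst sum.lessThan_Suc)
    apply (subst Suc)
    apply (simp only: qp_rec)
    apply (simp add: algebra_simps)
    done
qed

lemma pp0: assumes "\<forall>i\<in>{1..n}. a i \<noteq> (0::'a::idom)"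
  shows "k \<le> n \<Longrightarrow> poly (pp a k) 0 \<noteq> 0"
proof (induction k rule: less_induct)
  case (less k)
  show ?case
  proof (cases k)
    case 0 then show ?thesis by simp
  next
    case (Suc j)
    show ?thesis
    proof (cases j)
      case 0 then show ?thesis using assms less Suc by auto
    next
      case (Suc i)
      then show ?thesis using assms less \<open>k = Suc j\<close> by auto
    qed
  qed
qed


lemma qp_big: fixes b :: "nat \<Rightarrow> real"
  assumes b: "\<forall>i\<in>{1..n}. b i \<ge> 1" and mu: "\<mu> \<ge> 2"
  shows "Suc j \<le> n \<Longrightarrow> 1 \<le> poly (qp b j) \<mu> \<and> poly (qp b j) \<mu> \<le> poly (qp b (Suc j)) \<mu>"
proof (induction j)
  case 0
  have "b 1 \<ge> 1" using b 0 by auto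
  hence "b 1 * \<mu> \<ge> 1 * 2" using mu by (intro mult_mono) auto
  then show ?case by (simp add: mult.commute)
next
  case (Suc j)
  then have IH: "1 \<le> poly (qp b j) \<mu>" "poly (qp b j) \<mu> \<le> poly (qp b (Suc j)) \<mu>" by auto
  have "b (Suc (Suc j)) \<ge> 1" using b Suc.prems by auto
  hence "b (Suc (Suc j)) * \<mu> \<ge> 1 * 2" using mu by (intro mult_mono) auto
  hence "b (Suc (Suc j)) * \<mu> * poly (qp b (Suc j)) \<mu> \<ge> 2 * poly (qp b (Suc j)) \<mu>"
    using IH by (intro mult_right_mono) auto
  then show ?case using IH by (simp only: qp_rec) linarith
qed

lemma qp_big2: fixes b :: "nat \<Rightarrow> real"
  assumes b: "\<forall>i\<in>{1..n}. b i \<ge> 1" and mu: "\<mu> \<ge> 2" and j: "j \<le> n"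
  shows "poly (qp b j) \<mu> \<ge> 1"
proof (cases "j = 0")
  case True then show ?thesis by simp
next
  case False
  then obtain i where "j = Suc i" by (cases j) auto
  then show ?thesis using qp_big[OF b mu, of i] j by auto
qed

lemma largest_root: fixes b :: "nat \<Rightarrow> real"
  assumes n: "n \<ge> 2" and b: "\<forall>i\<in>{1..n}. b i \<ge> 1"
  shows "\<exists>\<mu>0>0. poly (qp b n) \<mu>0 = 0 \<and> (\<forall>j<n. poly (qp b j) \<mu>0 > 0)
            \<and> (\<forall>\<mu>>\<mu>0. poly (qp b n) \<mu> \<noteq> 0)"
proof -
  define Z where "Z = {\<mu>. \<mu> \<ge> 0 \<and> (\<exists>j\<in>{1..n}. poly (qp b j) \<mu> = 0)}"
  have nz: "qp b j \<noteq> 0" if "j \<le> n" for j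
    using qp_big2[OF b _ that, of 2] by auto
  have "Z \<subseteq> (\<Union>j\<in>{1..n}. {\<mu>. poly (qp b j) \<mu> = 0})" unfolding Z_def by auto
  moreover have "finite (\<Union>j\<in>{1..n}. {\<mu>. poly (qp b j) \<mu> = 0})"
    using nz by (auto intro: poly_roots_finite)
  ultimately have finZ: "finite Z" by (rule finite_subset)
  have "0 \<in> Z" unfolding Z_def using n by (auto intro!: bexI[of _ 1])
  define m where "m = Max Z"
  have mZ: "m \<in> Z" unfolding m_def using finZ \<open>0 \<in> Z\<close> by (intro Max_in) auto
  have m0: "m \<ge> 0" unfolding m_def using finZ \<open>0 \<in> Z\<close> by (intro Max_ge) auto
  have above: "\<not> (x \<in> Z)" if "x > m" for x
    using Max_ge[OF finZ, of x] that unfolding m_def by auto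
  have pos: "poly (qp b j) x > 0" if "x > m" "j \<le> n" for x j
  proof (cases "j = 0")
    case True then show ?thesis by simp
  next
    case False
    have ne: "poly (qp b j) x \<noteq> 0" using above[OF that(1)] that m0 False unfolding Z_def by auto
    show ?thesis
    proof (rule ccontr)
      assume "\<not> ?thesis"
      hence neg: "poly (qp b j) x < 0" using ne by auto
      have "x < 2" using qp_big2[OF b _ that(2), of x] neg by (cases "x \<ge> 2") auto
      from poly_IVT_pos[OF this neg] qp_big2[OF b _ that(2), of 2]
      obtain y where "x < y" "poly (qp b j) y = 0" by auto
      hence "y \<in> Z" unfolding Z_def using that m0 False by auto
      thus False using above[of y] \<open>x < y\<close> that by auto
    qed
  qed
  have nonneg: "poly (qp b j) m \<ge> 0" if "j \<le> n" for j
  proof (rule ccontr)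
    assume "\<not> ?thesis"
    hence neg: "poly (qp b j) m < 0" by auto
    have "m < m + 1" by simp
    from poly_IVT_pos[OF this neg pos[OF _ that]]
    obtain y where "m < y" "poly (qp b j) y = 0" by auto
    thus False using pos[OF _ that, of y] by auto
  qed
  have posm: "\<forall>j<n. poly (qp b j) m > 0"
  proof (intro allI impI)
    fix j assume "j < n" thus "poly (qp b j) m > 0"
    proof (induction j)
      case 0 then show ?case by simp
    next
      case (Suc j)
      show ?case
      proof (rule ccontr)
        assume "\<not> ?case"
        hence z: "poly (qp b (Suc j)) m = 0" using nonneg[of "Suc j"] Suc.prems by auto
        have "poly (qp b (Suc (Suc j))) m = - poly (qp b j) m" unfolding qp_rec z by simp
        moreover have "poly (qp b j) m > 0" using Suc by auto
        ultimately show False using nonneg[of "Suc (Suc j)"] Suc.prems by auto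
      qed
    qed
  qed
  from mZ obtain j where j: "j \<in> {1..n}" "poly (qp b j) m = 0" unfolding Z_def by auto
  have jn: "j = n" using posm j by (metis atLeastAtMost_iff le_neq_implies_less less_irrefl)
  have "m > 0"
  proof -
    have "poly (qp b 1) m > 0" using n by (intro posm[rule_format]) auto
    hence "m * b 1 > 0" by (simp add: mult.commute)
    thus ?thesis using m0 by (cases "m = 0") auto
  qed
  moreover have "\<forall>\<mu>>m. poly (qp b n) \<mu> \<noteq> 0" using pos by (metis less_irrefl order_refl)
  ultimately show ?thesis using posm j jn by blast
qed


lemma compare_roots: fixes b c :: "nat \<Rightarrow> real"
  assumes n: "n \<ge> 2"
    and b0: "\<forall>i\<in>{1..n}. b i \<ge> 0" and cb: "\<forall>i\<in>{1..n}. c i \<le> b i"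
    and k: "k \<in> {1..n}" "c k < b k"
    and rb: "poly (qp b n) x = 0" "\<forall>j<n. poly (qp b j) x > 0"
    and rc: "poly (qp c n) y = 0" "\<forall>j<n. poly (qp c j) y > 0" "y > 0"
  shows "x < y"
proof (rule ccontr)
  assume "\<not> x < y"
  hence yx: "y \<le> x" by simp
  obtain m where m: "n = Suc m" using n by (cases n) auto
  define T where "T j = (x * b (Suc j) - y * c (Suc j)) * poly (qp b j) x * poly (qp c j) y" for j
  have "sum T {..<n} = 0" unfolding T_def m using cd[of x b y c m] rb rc m by simp
  moreover have "sum T {..<n} > 0"
  proof (rule sum_pos2[where i="k - 1"])
    show "finite {..<n}" by simp
    show "k - 1 \<in> {..<n}" using k by auto
    have "x * b k - y * c k \<ge> y * b k - y * c k" using yx b0 k by (intro diff_right_mono mult_right_mono) auto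
    moreover have "y * b k - y * c k > 0" using k rc(3) by (simp add: right_diff_distrib[symmetric])
    ultimately have "x * b k - y * c k > 0" by linarith
    moreover have "Suc (k - 1) = k" using k by auto
    ultimately show "0 < T (k - 1)" unfolding T_def using rb rc k by auto
    show "0 \<le> T i" if i: "i \<in> {..<n}" for i
    proof -
      have "x * b (Suc i) - y * c (Suc i) \<ge> y * b (Suc i) - y * c (Suc i)"
        using yx b0 i by (intro diff_right_mono mult_right_mono) auto
      moreover have "y * b (Suc i) - y * c (Suc i) \<ge> 0" using cb rc(3) i
        by (simp add: right_diff_distrib[symmetric])
      ultimately have "x * b (Suc i) - y * c (Suc i) \<ge> 0" by linarith
      moreover have "poly (qp b i) x > 0" "poly (qp c i) y > 0" using rb rc i by auto
      ultimately show "0 \<le> T i" unfolding T_def by (intro mult_nonneg_nonneg) auto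
    qed
  qed
  ultimately show False by simp
qed

lemma qp_cnj: assumes "\<forall>i. cnj (c i) = c i"
  shows "poly (qp c j) (cnj x) = cnj (poly (qp c j) x) \<and> poly (qp c (Suc j)) (cnj x) = cnj (poly (qp c (Suc j)) x)"
  by (induction j) (simp_all add: qp_rec assms)

lemma complex_roots: fixes a :: "nat \<Rightarrow> int"
  assumes n: "n \<ge> 1" and a: "\<forall>i\<in>{1..n}. a i > 0"
    and z: "poly (pp (\<lambda>i. complex_of_int (a i)) n) z = 0"
  shows "Im z = 0 \<and> Re z > 0"
proof -
  define c where "c i = complex_of_int (a i)" for i
  have "\<forall>i\<in>{1..n}. c i \<noteq> 0" using a by (auto simp: c_def)
  hence "z \<noteq> 0" using pp0[of n c n] z unfolding c_def by auto
  define s where "s = csqrt z"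
  have s2: "s^2 = z" unfolding s_def by simp
  have s0: "s \<noteq> 0" using s2 \<open>z \<noteq> 0\<close> by auto
  define \<mu> where "\<mu> = s - 1/s"
  have "poly (pp c n) (s^2) = s^n * poly (qp c n) \<mu>" unfolding \<mu>_def using pp_qp[OF s0] by blast
  hence qn: "poly (qp c n) \<mu> = 0" using z s0 s2 unfolding c_def by simp
  obtain m where m: "n = Suc m" using n by (cases n) auto
  have cc: "\<forall>i. cnj (c i) = c i" unfolding c_def by simp
  have "(\<Sum>j<Suc m. (\<mu> * c (Suc j) - cnj \<mu> * c (Suc j)) * poly (qp c j) \<mu> * poly (qp c j) (cnj \<mu>)) = 0"
    using cd[of \<mu> c "cnj \<mu>" c m] qn m qp_cnj[OF cc] by simp
  also have "(\<Sum>j<Suc m. (\<mu> * c (Suc j) - cnj \<mu> * c (Suc j)) * poly (qp c j) \<mu> * poly (qp c j) (cnj \<mu>))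
     = (\<mu> - cnj \<mu>) * of_real (\<Sum>j<Suc m. real_of_int (a (Suc j)) * (cmod (poly (qp c j) \<mu>))^2)"
  proof -
    have trm: "(\<mu> * c (Suc j) - cnj \<mu> * c (Suc j)) * poly (qp c j) \<mu> * poly (qp c j) (cnj \<mu>)
       = (\<mu> - cnj \<mu>) * of_real (real_of_int (a (Suc j)) * (cmod (poly (qp c j) \<mu>))^2)" for j
      using qp_cnj[OF cc, of j \<mu>] by (simp add: c_def[of "Suc j"] algebra_simps flip: complex_norm_square)
    show ?thesis by (simp only: trm sum_distrib_left of_real_sum)
  qed
  finally have eq: "(\<mu> - cnj \<mu>) * of_real (\<Sum>j<Suc m. real_of_int (a (Suc j)) * (cmod (poly (qp c j) \<mu>))^2) = 0" .
  define R where "R = (\<Sum>j<Suc m. real_of_int (a (Suc j)) * (cmod (poly (qp c j) \<mu>))^2)"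
  have eqR: "(\<mu> - cnj \<mu>) * of_real R = 0" using eq unfolding R_def .
  have "R > 0" unfolding R_def
  proof (rule sum_pos2[where i=0])
    show "0 < real_of_int (a (Suc 0)) * (cmod (poly (qp c 0) \<mu>))\<^sup>2" using a n by auto
    show "0 \<le> real_of_int (a (Suc i)) * (cmod (poly (qp c i) \<mu>))\<^sup>2" if "i \<in> {..<Suc m}" for i
    proof -
      have "a (Suc i) > 0" using a m that by auto
      thus ?thesis by (intro mult_nonneg_nonneg) auto
    qed
  qed auto
  hence "(of_real R :: complex) \<noteq> 0" by simp
  with eqR have "\<mu> - cnj \<mu> = 0" by (simp only: mult_eq_0_iff) blast
  hence "\<mu> = cnj \<mu>" by simp
  hence im\<mu>: "Im \<mu> = 0" by (metis cnj.sel(2) neg_equal_zero)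
  define d where "d = (Re s)^2 + (Im s)^2"
  have d0: "d > 0" unfolding d_def using s0
    by (metis complex_eq_0 sum_power2_ge_zero order_le_less)
  have "Im \<mu> = Im s + Im s / d" unfolding \<mu>_def d_def by (simp add: Im_divide power2_eq_square)
  also have "\<dots> = Im s * ((d + 1) / d)" using d0 by (simp add: field_simps)
  finally have "Im s * ((d + 1) / d) = 0" using im\<mu> by simp
  moreover have "(d + 1) / d \<noteq> 0" using d0 by simp
  ultimately have "Im s = 0" by simp
  moreover have "Re s \<noteq> 0" using s0 \<open>Im s = 0\<close> complex_eq_iff by auto
  ultimately show ?thesis using s2 by (auto simp: power2_eq_square zero_less_mult_iff)
qed


lemma sg_nz: "sg n \<noteq> 0"
  by (induction n) auto

lemma poly_of_real_map: "poly (map_poly of_int p) (of_real x :: complex) = of_real (poly (map_poly of_int p) x)"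
  by (simp add: poly_altdef degree_map_poly coeff_map_poly)

lemma only_real: fixes a :: "nat \<Rightarrow> int"
  assumes n: "n \<ge> 1" and a: "\<forall>i\<in>{1..n}. a i > 0"
  shows "only_real_zeros (alexander_poly (alt_seq a n))"
  unfolding only_real_zeros_def
proof (intro allI impI)
  fix z :: complex
  assume "poly (map_poly of_int (alexander_poly (alt_seq a n))) z = 0"
  hence "poly (pp (\<lambda>i. complex_of_int (a i)) n) z = 0" using sg_nz[of n] by (simp add: eval_alex)
  from complex_roots[OF n a this] show "z \<in> \<real>" by (simp add: complex_is_Real_iff)
qed

lemma real_root_pos: fixes a :: "nat \<Rightarrow> int"
  assumes n: "n \<ge> 1" and a: "\<forall>i\<in>{1..n}. a i > 0"
    and x: "poly (pp (\<lambda>i. real_of_int (a i)) n) x = 0"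
  shows "x > 0"
proof -
  have "poly (pp (\<lambda>i. complex_of_int (a i)) n) (of_real x) = of_real (poly (pp (\<lambda>i. real_of_int (a i)) n) x)"
    using poly_of_real_map[of "pp a n" x] by (simp add: mp_pp)
  with x have "poly (pp (\<lambda>i. complex_of_int (a i)) n) (of_real x) = 0" by simp
  from complex_roots[OF n a this] show ?thesis by simp
qed

definition sfun :: "real \<Rightarrow> real" where "sfun m = (m + sqrt (m^2 + 4)) / 2"

lemma sfun_pos: "sfun m > 0"
proof -
  have "\<bar>m\<bar> = sqrt (m^2)" by simp
  also have "\<dots> < sqrt (m^2 + 4)" by (rule real_sqrt_less_mono) simp
  finally have "\<bar>m\<bar> < sqrt (m^2 + 4)" .
  hence "m + sqrt (m^2 + 4) > 0" by (cases "m \<ge> 0") auto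
  thus ?thesis unfolding sfun_def by simp
qed

lemma sfun_inv: "sfun m - 1 / sfun m = m"
proof -
  have p: "sfun m > 0" by (rule sfun_pos)
  have S: "(sqrt (m^2 + 4))^2 = m^2 + 4" by simp
  have "sfun m * sfun m - m * sfun m - 1 = 0"
    unfolding sfun_def using S by (simp add: field_simps power2_eq_square)
  hence "sfun m * sfun m = m * sfun m + 1" by simp
  thus ?thesis using p by (simp add: field_simps)
qed

lemma sfun_mono: assumes "m < m'" shows "sfun m < sfun m'"
proof (rule ccontr)
  assume "\<not> ?thesis"
  hence le: "sfun m' \<le> sfun m" by simp
  have "1 / sfun m \<le> 1 / sfun m'" using le sfun_pos[of m'] by (intro divide_left_mono) auto
  hence "sfun m' - 1 / sfun m' \<le> sfun m - 1 / sfun m" using le by linarith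
  thus False using assms unfolding sfun_inv by simp
qed

lemma delta_eq: fixes a :: "nat \<Rightarrow> int"
  assumes n: "n \<ge> 1" and a: "\<forall>i\<in>{1..n}. a i > 0"
    and r: "poly (qp (\<lambda>i. real_of_int (a i)) n) m = 0"
    and big: "\<forall>\<mu>>m. poly (qp (\<lambda>i. real_of_int (a i)) n) \<mu> \<noteq> 0"
  shows "delta (alt_seq a n) = (sfun m)^2"
proof -
  define b where "b = (\<lambda>i. real_of_int (a i))"
  have R: "{x::real. poly (map_poly of_int (alexander_poly (alt_seq a n))) x = 0} = {x. poly (pp b n) x = 0}"
    using sg_nz[of n] by (simp add: eval_alex b_def)
  have "\<forall>i\<in>{1..n}. b i \<noteq> 0" using a unfolding b_def by auto
  hence "poly (pp b n) 0 \<noteq> 0" using pp0[of n b n] by simp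
  hence fin: "finite {x. poly (pp b n) x = 0}" by (intro poly_roots_finite) auto
  define s0 where "s0 = sfun m"
  have s0p: "s0 > 0" unfolding s0_def by (rule sfun_pos)
  have "poly (pp b n) (s0^2) = s0^n * poly (qp b n) (s0 - 1/s0)"
    using pp_qp[of s0 b n] s0p by auto
  hence t0: "poly (pp b n) (s0^2) = 0" using r unfolding s0_def sfun_inv b_def by simp
  have le: "x \<le> s0^2" if x: "poly (pp b n) x = 0" for x
  proof -
    have xp: "x > 0" using real_root_pos[OF n a] x unfolding b_def by simp
    define s where "s = sqrt x"
    have sp: "s > 0" and s2: "s^2 = x" using xp unfolding s_def by auto
    have "poly (pp b n) (s^2) = s^n * poly (qp b n) (s - 1/s)"
      using pp_qp[of s b n] sp by auto
    hence "poly (qp b n) (s - 1/s) = 0" using x s2 sp by simp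
    hence "\<not> (s - 1/s > m)" using big unfolding b_def by auto
    have "s \<le> s0"
    proof (rule ccontr)
      assume "\<not> s \<le> s0"
      hence "s0 < s" by simp
      hence "1/s < 1/s0" using s0p by (intro divide_strict_left_mono) auto
      hence "s - 1/s > s0 - 1/s0" using \<open>s0 < s\<close> by linarith
      thus False using \<open>\<not> (s - 1/s > m)\<close> unfolding s0_def sfun_inv by simp
    qed
    thus ?thesis using power_mono[of s s0 2] s2 sp by auto
  qed
  show ?thesis unfolding delta_def R
    by (rule Max_eqI[OF fin]) (use le t0 s0_def in auto)
qed

theorem theorem9p7:
  fixes a :: "nat \<Rightarrow> int" and n k :: nat
  assumes "n \<ge> 2"
    and "\<forall>i\<in>{1..n}. a i > 0"
    and "1 \<le> k" and "k \<le> n"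
    and "a k > 1"
  shows "only_real_zeros (alexander_poly (alt_seq a n))
       \<and> only_real_zeros (alexander_poly (alt_seq (a(k := a k - 1)) n))
       \<and> delta (alt_seq a n) < delta (alt_seq (a(k := a k - 1)) n)"
proof -
  define a' where "a' = a(k := a k - 1)"
  have n1: "n \<ge> 1" using assms by simp
  have a': "\<forall>i\<in>{1..n}. a' i > 0" using assms unfolding a'_def by auto
  have b1: "\<forall>i\<in>{1..n}. real_of_int (a i) \<ge> 1" using assms(2) by (auto simp: int_one_le_iff_zero_less[symmetric])
  have b1': "\<forall>i\<in>{1..n}. real_of_int (a' i) \<ge> 1" using a' by (auto simp: int_one_le_iff_zero_less[symmetric])
  obtain m where m: "m > 0" "poly (qp (\<lambda>i. real_of_int (a i)) n) m = 0"
     "\<forall>j<n. poly (qp (\<lambda>i. real_of_int (a i)) j) m > 0"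
     "\<forall>\<mu>>m. poly (qp (\<lambda>i. real_of_int (a i)) n) \<mu> \<noteq> 0"
    using largest_root[OF assms(1) b1] by blast
  obtain m' where m': "m' > 0" "poly (qp (\<lambda>i. real_of_int (a' i)) n) m' = 0"
     "\<forall>j<n. poly (qp (\<lambda>i. real_of_int (a' i)) j) m' > 0"
     "\<forall>\<mu>>m'. poly (qp (\<lambda>i. real_of_int (a' i)) n) \<mu> \<noteq> 0"
    using largest_root[OF assms(1) b1'] by blast
  have "m < m'"
  proof (rule compare_roots[OF assms(1)])
    show "\<forall>i\<in>{1..n}. 0 \<le> real_of_int (a i)" using assms(2) by (auto simp: less_imp_le)
    show "\<forall>i\<in>{1..n}. real_of_int (a' i) \<le> real_of_int (a i)" unfolding a'_def by auto
    show "k \<in> {1..n}" using assms by auto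
    show "real_of_int (a' k) < real_of_int (a k)" unfolding a'_def by simp
  qed (use m m' in auto)
  have d: "delta (alt_seq a n) = (sfun m)^2" using delta_eq[OF n1 assms(2) m(2) m(4)] .
  have d': "delta (alt_seq a' n) = (sfun m')^2" using delta_eq[OF n1 a' m'(2) m'(4)] .
  have "(sfun m)^2 < (sfun m')^2"
    using sfun_mono[OF \<open>m < m'\<close>] sfun_pos[of m] by (intro power_strict_mono) auto
  hence "delta (alt_seq a n) < delta (alt_seq a' n)" using d d' by simp
  thus ?thesis using only_real[OF n1 assms(2)] only_real[OF n1 a'] unfolding a'_def by blast
qed

end
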